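(* Let $\mathfrak{g} = \mathfrak{r}_3$, the three-dimensional Lie algebra with basis $\{e_1,e_2,e_3\}$ and nonzero brackets $[e_1,e_2]=e_2+e_3$, $[e_1,e_3]=e_3$. For every inner product $\langle\cdot,\cdot\rangle$ on $\mathfrak{g}$, there exist $\lambda > 0$, $k > 0$, and an orthonormal basis $\{x_1, x_2, x_3\}$ with respect to $k \langle\cdot,\cdot\rangle$ such that the bracket relations are given by \[ [x_1,x_2] = x_2 + \lambda x_3, \quad [x_1,x_3] = x_3 \] (and $[x_2,x_3]=0$). Furthermore, the matrix expression of the derivation algebra $\mathrm{Der}(\mathfrak{g})$ with respect to $\{x_1, x_2, x_3\}$ coincides with \[ \left\{ \begin{pmatrix} 0 & 0 & 0 \\ x_{21} & x_{22} & 0 \\ x_{31} & x_{32} & x_{22} \end{pmatrix} \;\middle|\; x_{21}, x_{22}, x_{31}, x_{32} \in \mathbb{R} \right\}. \] *)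

theory Defs
  imports "HOL-Analysis.Analysis"
begin

definition r3_e1 :: "real^3" where "r3_e1 = vector [1, 0, 0]"
definition r3_e2 :: "real^3" where "r3_e2 = vector [0, 1, 0]"
definition r3_e3 :: "real^3" where "r3_e3 = vector [0, 0, 1]"

text \<open>Bilinear, skew extension of [e1,e2] = e2 + e3, [e1,e3] = e3, [e2,e3] = 0:
  [a,b] = (a1 b2 - a2 b1)(e2 + e3) + (a1 b3 - a3 b1) e3.\<close>
definition r3_bracket :: "real^3 \<Rightarrow> real^3 \<Rightarrow> real^3" where
  "r3_bracket a b =
     (a$1 * b$2 - a$2 * b$1) *\<^sub>R (r3_e2 + r3_e3) + (a$1 * b$3 - a$3 * b$1) *\<^sub>R r3_e3"

definition inner_product_on :: "(real^3 \<Rightarrow> real^3 \<Rightarrow> real) \<Rightarrow> bool" where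
  "inner_product_on B \<longleftrightarrow> bilinear B \<and> (\<forall>x y. B x y = B y x) \<and> (\<forall>x. x \<noteq> 0 \<longrightarrow> 0 < B x x)"

definition r3_derivation :: "(real^3 \<Rightarrow> real^3) \<Rightarrow> bool" where
  "r3_derivation D \<longleftrightarrow> linear D \<and>
     (\<forall>a b. D (r3_bracket a b) = r3_bracket (D a) b + r3_bracket a (D b))"

text \<open>Matrix expression of Der(r_3) w.r.t. a basis xb: M is the matrix of D
  when D (xb j) = sum_i M_ij xb i (j-th column = coordinates of D xb_j).\<close>
definition der_matrices :: "(3 \<Rightarrow> real^3) \<Rightarrow> (real^3^3) set" where
  "der_matrices xb = {M. \<exists>D. r3_derivation D \<and>
      (\<forall>j. D (xb j) = (\<Sum>i\<in>UNIV. (M$i$j) *\<^sub>R xb i))}"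

end

theory Submission
  imports Defs
begin
lemma br_comp: "r3_bracket a b = vector [0, a$1*b$2 - a$2*b$1, (a$1*b$2 - a$2*b$1) + (a$1*b$3 - a$3*b$1)]"
  by (simp add: r3_bracket_def r3_e2_def r3_e3_def vec_eq_iff forall_3 algebra_simps)
lemma br_addL[simp]: "r3_bracket (a + c) b = r3_bracket a b + r3_bracket c b"
  by (simp add: br_comp vec_eq_iff forall_3 algebra_simps)
lemma br_addR[simp]: "r3_bracket b (a + c) = r3_bracket b a + r3_bracket b c"
  by (simp add: br_comp vec_eq_iff forall_3 algebra_simps)
lemma br_scL[simp]: "r3_bracket (r *\<^sub>R a) b = r *\<^sub>R r3_bracket a b"
  by (simp add: br_comp vec_eq_iff forall_3 algebra_simps)
lemma br_scR[simp]: "r3_bracket b (r *\<^sub>R a) = r *\<^sub>R r3_bracket b a"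
  by (simp add: br_comp vec_eq_iff forall_3 algebra_simps)
lemma br_skew: "r3_bracket b a = - r3_bracket a b"
  by (simp add: br_comp vec_eq_iff forall_3 algebra_simps)
lemma br_self[simp]: "r3_bracket a a = 0"
  by (simp add: br_comp vec_eq_iff forall_3 algebra_simps)
lemma br_bilinear: "bilinear r3_bracket"
  unfolding bilinear_def by (auto intro!: linearI)
lemma span3: "card {x1,x2,x3::real^3} = 3 \<Longrightarrow> independent {x1,x2,x3} \<Longrightarrow> span {x1,x2,x3} = UNIV"
  using card_eq_dim[of "{x1,x2,x3}" UNIV] by auto

lemma aux: "(lam::real) > 0 \<Longrightarrow> a + c*lam = 0 \<Longrightarrow> lam*c = a \<Longrightarrow> lam*d = a*lam + b*lam \<Longrightarrow> a=0 \<and> c=0 \<and> d=b"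
proof -
  assume h: "lam > 0" "a + c*lam = 0" "lam*c = a" "lam*d = a*lam + b*lam"
  then have "2*(lam*c) = 0" by (simp add: algebra_simps)
  then have c: "c = 0" using h(1) by simp
  then have a: "a = 0" using h(3) by simp
  then have "lam*d = lam*b" using h(4) by (simp add: algebra_simps)
  then show ?thesis using a c h(1) by simp
qed

lemma der_char:
  fixes B :: "real^3 \<Rightarrow> real^3 \<Rightarrow> real" and xb :: "3 \<Rightarrow> real^3"
  assumes ip: "inner_product_on B" and k: "k > 0" and lam: "lam > 0"
  and orth: "\<forall>i j. k * B (xb i) (xb j) = (if i = j then 1 else 0)"
  and b12: "r3_bracket (xb 1) (xb 2) = xb 2 + lam *\<^sub>R xb 3"
  and b13: "r3_bracket (xb 1) (xb 3) = xb 3" and b23: "r3_bracket (xb 2) (xb 3) = 0"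
  shows "der_matrices xb =
       {M. \<exists>x21 x22 x31 x32.
          M = vector [vector [0, 0, 0], vector [x21, x22, 0], vector [x31, x32, x22]]}"
proof -
  have bl: "bilinear B" using ip unfolding inner_product_on_def by auto
  define cf where "cf m v = k * B (xb m) v" for m v
  have cf_add[simp]: "cf m (u + v) = cf m u + cf m v" for m u v
    by (simp add: cf_def bilinear_radd[OF bl] algebra_simps)
  have cf_sc[simp]: "cf m (r *\<^sub>R v) = r * cf m v" for m r v
    by (simp add: cf_def bilinear_rmul[OF bl] algebra_simps)
  have cf_neg[simp]: "cf m (- v) = - cf m v" for m v
    by (simp add: cf_def bilinear_rneg[OF bl] algebra_simps)
  have cf_zero[simp]: "cf m 0 = 0" for m
    by (simp add: cf_def bilinear_rzero[OF bl])
  have cf_xb[simp]: "cf m (xb j) = (if m = j then 1 else 0)" for m j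
    using orth by (simp add: cf_def)
  have b21: "r3_bracket (xb 2) (xb 1) = - xb 2 - lam *\<^sub>R xb 3"
    using b12 br_skew[of "xb 2" "xb 1"] by simp
  have b31: "r3_bracket (xb 3) (xb 1) = - xb 3"
    using b13 br_skew[of "xb 3" "xb 1"] by simp
  have b32: "r3_bracket (xb 3) (xb 2) = 0"
    using b23 br_skew[of "xb 3" "xb 2"] by simp
  note brs = b12 b13 b23 b21 b31 b32
  have d12: "xb 1 \<noteq> xb 2" "xb 1 \<noteq> xb 3" "xb 2 \<noteq> xb 3"
  proof -
    have "cf 1 (xb 1) \<noteq> cf 1 (xb 2)" "cf 1 (xb 1) \<noteq> cf 1 (xb 3)" "cf 2 (xb 2) \<noteq> cf 2 (xb 3)" by simp_all
    then show "xb 1 \<noteq> xb 2" "xb 1 \<noteq> xb 3" "xb 2 \<noteq> xb 3" by metis+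
  qed
  show ?thesis
  proof (intro set_eqI iffI)
    fix M assume "M \<in> der_matrices xb"
    then obtain D where der: "r3_derivation D" and dD: "\<And>j. D (xb j) = (\<Sum>i\<in>UNIV. (M$i$j) *\<^sub>R xb i)"
      unfolding der_matrices_def by auto
    have dD': "D (xb j) = M$1$j *\<^sub>R xb 1 + M$2$j *\<^sub>R xb 2 + M$3$j *\<^sub>R xb 3" for j
      using dD[of j] by (simp add: sum_3)
    have dl: "linear D" and dr: "\<And>a b. D (r3_bracket a b) = r3_bracket (D a) b + r3_bracket a (D b)"
      using der unfolding r3_derivation_def by auto
    have lD: "D (xb 2 + lam *\<^sub>R xb 3) = D (xb 2) + lam *\<^sub>R D (xb 3)"
      using dl by (simp add: linear_add linear_scale)
    have E13: "D (xb 3) = r3_bracket (D (xb 1)) (xb 3) + r3_bracket (xb 1) (D (xb 3))"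
      using dr[of "xb 1" "xb 3"] b13 by simp
    have E23: "D 0 = r3_bracket (D (xb 2)) (xb 3) + r3_bracket (xb 2) (D (xb 3))"
      using dr[of "xb 2" "xb 3"] b23 by simp
    have E12: "D (xb 2) + lam *\<^sub>R D (xb 3) = r3_bracket (D (xb 1)) (xb 2) + r3_bracket (xb 1) (D (xb 2))"
      using dr[of "xb 1" "xb 2"] b12 lD by simp
    have D0: "D 0 = 0" using dl linear_0 by blast
    have F13: "cf m (D (xb 3)) = cf m (r3_bracket (D (xb 1)) (xb 3) + r3_bracket (xb 1) (D (xb 3)))" for m
      using E13 by simp
    have F23: "cf m (D 0) = cf m (r3_bracket (D (xb 2)) (xb 3) + r3_bracket (xb 2) (D (xb 3)))" for m
      using E23 by simp
    have F12: "cf m (D (xb 2) + lam *\<^sub>R D (xb 3)) = cf m (r3_bracket (D (xb 1)) (xb 2) + r3_bracket (xb 1) (D (xb 2)))" for m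
      using E12 by simp
    note G = F13[of 1] F13[of 2] F13[of 3] F23[of 1] F23[of 2] F23[of 3] F12[of 1] F12[of 2] F12[of 3]
    note H = G[unfolded dD' D0, simplified brs br_addL br_addR br_scL br_scR br_self, simplified]
    show "M \<in> {M. \<exists>x21 x22 x31 x32.
          M = vector [vector [0, 0, 0], vector [x21, x22, 0], vector [x31, x32, x22]]}"
      using H lam
      apply (simp add: vec_eq_iff forall_3)
      using aux by blast
  next
    fix M :: "real^3^3" assume "M \<in> {M. \<exists>x21 x22 x31 x32.
          M = vector [vector [0, 0, 0], vector [x21, x22, 0], vector [x31, x32, x22]]}"
    then obtain x21 x22 x31 x32 where M: "M = vector [vector [0, 0, 0], vector [x21, x22, 0], vector [x31, x32, x22]]"
      by auto
    define c where "c j = (\<Sum>i\<in>UNIV. (M$i$j) *\<^sub>R xb i)" for j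
    define D where "D v = (\<Sum>j\<in>UNIV. cf j v *\<^sub>R c j)" for v
    have Dadd[simp]: "D (u + v) = D u + D v" for u v
      by (simp add: D_def scaleR_add_left sum.distrib)
    have Dsc[simp]: "D (r *\<^sub>R v) = r *\<^sub>R D v" for r v
      by (simp add: D_def scaleR_sum_right)
    have lD: "linear D" by (intro linearI) simp_all
    have Dxb: "D (xb j) = c j" for j
      proof -
      have "D (xb j) = (\<Sum>m\<in>UNIV. (if m = j then c m else 0))"
        unfolding D_def by (intro sum.cong) auto
      then show ?thesis by simp
    qed
    have c1: "c 1 = x21 *\<^sub>R xb 2 + x31 *\<^sub>R xb 3" and c2: "c 2 = x22 *\<^sub>R xb 2 + x32 *\<^sub>R xb 3"
      and c3: "c 3 = x22 *\<^sub>R xb 3"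
      by (simp_all add: c_def M sum_3)
    have Dx: "D (xb 1) = x21 *\<^sub>R xb 2 + x31 *\<^sub>R xb 3" "D (xb 2) = x22 *\<^sub>R xb 2 + x32 *\<^sub>R xb 3"
      "D (xb 3) = x22 *\<^sub>R xb 3"
      using Dxb c1 c2 c3 by simp_all
    have D0: "D 0 = 0" using lD linear_0 by blast
    have Dneg: "D (- v) = - D v" for v using lD linear_neg by blast
    have Ddiff: "D (u - v) = D u - D v" for u v using lD linear_diff by blast
    have ind: "independent {xb 1, xb 2, xb 3}"
    proof (rule independent_if_scalars_zero)
      fix f x assume s: "(\<Sum>x\<in>{xb 1, xb 2, xb 3}. f x *\<^sub>R x) = 0" and x: "x \<in> {xb 1, xb 2, xb 3}"
      have s': "f (xb 1) *\<^sub>R xb 1 + f (xb 2) *\<^sub>R xb 2 + f (xb 3) *\<^sub>R xb 3 = 0"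
        using s d12 by (simp add: add.assoc)
      have "cf m (f (xb 1) *\<^sub>R xb 1 + f (xb 2) *\<^sub>R xb 2 + f (xb 3) *\<^sub>R xb 3) = 0" for m
        using s' by simp
      from this[of 1] this[of 2] this[of 3] x show "f x = 0" by auto
    qed simp
    have card: "card {xb 1, xb 2, xb 3} = 3" using d12 by simp
    have sp: "span {xb 1, xb 2, xb 3} = UNIV" using span3[OF card ind] .
    have bf: "bilinear (\<lambda>a b. D (r3_bracket a b))"
      unfolding bilinear_def by (auto intro!: linearI)
    have bg: "bilinear (\<lambda>a b. r3_bracket (D a) b + r3_bracket a (D b))"
      unfolding bilinear_def by (auto intro!: linearI simp: algebra_simps)
    have "D (r3_bracket a b) = r3_bracket (D a) b + r3_bracket a (D b)" for a b
    proof (rule bilinear_eq[OF bf bg, of UNIV "{xb 1, xb 2, xb 3}" UNIV "{xb 1, xb 2, xb 3}"])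
      fix x y assume "x \<in> {xb 1, xb 2, xb 3}" "y \<in> {xb 1, xb 2, xb 3}"
      then show "D (r3_bracket x y) = r3_bracket (D x) y + r3_bracket x (D y)"
        by (auto simp: brs Dx D0 Dneg Ddiff algebra_simps)
    qed (simp_all add: sp)
    then have "r3_derivation D" using lD unfolding r3_derivation_def by auto
    then show "M \<in> der_matrices xb"
      unfolding der_matrices_def using Dxb c_def by auto
  qed
qed

lemma brn: "a$1 = 1 \<Longrightarrow> b$1 = 0 \<Longrightarrow> r3_bracket a b = b + (b$2) *\<^sub>R r3_e3"
  by (simp add: br_comp r3_e3_def vec_eq_iff forall_3)
lemma br00: "a$1 = 0 \<Longrightarrow> b$1 = 0 \<Longrightarrow> r3_bracket a b = 0"
  by (simp add: br_comp vec_eq_iff forall_3)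

theorem proposition4p6:
  fixes B :: "real^3 \<Rightarrow> real^3 \<Rightarrow> real"
  assumes "inner_product_on B"
  shows "\<exists>(lam::real) (k::real) (xb::3 \<Rightarrow> real^3). lam > 0 \<and> k > 0 \<and>
     (\<forall>i j. k * B (xb i) (xb j) = (if i = j then 1 else 0)) \<and>
     r3_bracket (xb 1) (xb 2) = xb 2 + lam *\<^sub>R xb 3 \<and>
     r3_bracket (xb 1) (xb 3) = xb 3 \<and>
     r3_bracket (xb 2) (xb 3) = 0 \<and>
     der_matrices xb =
       {M. \<exists>x21 x22 x31 x32.
          M = vector [vector [0, 0, 0], vector [x21, x22, 0], vector [x31, x32, x22]]}"
proof -
  have bl: "bilinear B" and sym: "\<And>x y. B x y = B y x" and pos: "\<And>x. x \<noteq> 0 \<Longrightarrow> 0 < B x x"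
    using assms unfolding inner_product_on_def by auto
  note bsimps = bilinear_ladd[OF bl] bilinear_radd[OF bl] bilinear_lmul[OF bl] bilinear_rmul[OF bl]
    bilinear_lsub[OF bl] bilinear_rsub[OF bl]
  have e1c: "r3_e1$1 = 1" "r3_e1$2 = 0" "r3_e1$3 = 0" by (simp_all add: r3_e1_def)
  have e2c: "r3_e2$1 = 0" "r3_e2$2 = 1" "r3_e2$3 = 0" by (simp_all add: r3_e2_def)
  have e3c: "r3_e3$1 = 0" "r3_e3$2 = 0" "r3_e3$3 = 1" by (simp_all add: r3_e3_def)
  define b33 where "b33 = B r3_e3 r3_e3"
  have b33: "b33 > 0" unfolding b33_def using e3c by (intro pos) auto
  define u2 where "u2 = r3_e2 - (B r3_e2 r3_e3 / b33) *\<^sub>R r3_e3"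
  have u2c: "u2$1 = 0" "u2$2 = 1" using e2c e3c by (simp_all add: u2_def)
  have u2e3: "B u2 r3_e3 = 0" using b33 by (simp add: u2_def bsimps b33_def)
  have e3u2: "B r3_e3 u2 = 0" using u2e3 sym by metis
  have nu2: "B u2 u2 > 0" using u2c by (intro pos) auto
  define u1 where "u1 = r3_e1 - (B r3_e1 u2 / B u2 u2) *\<^sub>R u2 - (B r3_e1 r3_e3 / b33) *\<^sub>R r3_e3"
  have u1c: "u1$1 = 1" using e1c e3c u2c by (simp add: u1_def)
  have u1u2: "B u1 u2 = 0" using nu2 by (simp add: u1_def bsimps e3u2)
  have u1e3: "B u1 r3_e3 = 0" using b33 by (simp add: u1_def bsimps u2e3 b33_def)
  define N where "N = B u1 u1"
  have N: "N > 0" unfolding N_def using u1c by (intro pos) auto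
  define p where "p = sqrt (N / B u2 u2)"
  define c where "c = sqrt (N / b33)"
  have p: "p > 0" "p * p * B u2 u2 = N" using N nu2 by (simp_all add: p_def)
  have c: "c > 0" "c * c * b33 = N" using N b33 by (simp_all add: c_def)
  define xb :: "3 \<Rightarrow> real^3" where "xb i = (if i = 1 then u1 else if i = 2 then p *\<^sub>R u2 else c *\<^sub>R r3_e3)" for i
  have x1: "xb 1 = u1" and x2: "xb 2 = p *\<^sub>R u2" and x3: "xb 3 = c *\<^sub>R r3_e3" by (simp_all add: xb_def)
  define k where "k = 1 / N"
  have k: "k > 0" using N by (simp add: k_def)
  have orth: "\<forall>i j. k * B (xb i) (xb j) = (if i = j then 1 else 0)"
    unfolding forall_3 using N p c
    by (simp add: x1 x2 x3 bsimps k_def u1u2 u1e3 u2e3 e3u2 sym[of u2 u1] sym[of r3_e3 u1] N_def[symmetric] b33_def[symmetric]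
        field_simps)
  have lam: "p / c > 0" using p c by simp
  have b12: "r3_bracket (xb 1) (xb 2) = xb 2 + (p / c) *\<^sub>R xb 3"
    using c u1c u2c by (simp add: x1 x2 x3 brn scaleR_add_right)
  have b13: "r3_bracket (xb 1) (xb 3) = xb 3"
    using u1c e3c by (simp add: x1 x3 brn)
  have b23: "r3_bracket (xb 2) (xb 3) = 0"
    using u2c e3c by (simp add: x2 x3 br00)
  show ?thesis
    using der_char[OF assms k lam orth b12 b13 b23] lam k orth b12 b13 b23 by blast
qed
end
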